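(* Let $G$ be a strongly connected digraph with $n\geq 2$ vertices. (1) If $G$ contains an $m$-wheel for some $m\geq 1$, then $G$ admits a boolean nilpotent function of class at most $2n-m+1$. (2) If $G$ has a loop, then $G$ admits a boolean nilpotent function of class at most $2n-1$.
   Context: Digraphs may have loops but no multiple arcs. For $m\geq 1$, the $m$-wheel $W_m$ is the digraph obtained from a directed cycle $C_m$ of length $m$ (for $m=1$, a single vertex with a loop) by adding a new vertex $v$ (the center) and an arc from $v$ to every vertex of $C_m$; $G$ contains an $m$-wheel if some subgraph of $G$ is isomorphic to $W_m$. A boolean function on $[n]$ is a map $f:\{0,1\}^n\to\{0,1\}^n$; its (unsigned) interaction graph has an arc $(j,i)$ iff $f_i$ depends essentially on $x_j$, i.e. $f_i(a)\neq f_i(b)$ for some $a,b$ differing only in coordinate $j$. $G$ admits $f$ if the interaction graph of $f$ equals $G$. $f$ is nilpotent if $f^k$ is constant for some $k\geq 0$ ($f^0=\mathrm{id}$); the least such $k$ is its class. *)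

theory Defs
  imports Main
begin

text \<open>Digraphs on a finite vertex type 'n: a set of arcs (loops allowed, no multiple arcs).\<close>

definition strongly_connected :: "('n \<times> 'n) set \<Rightarrow> bool" where
  "strongly_connected G \<longleftrightarrow> (\<forall>u v. (u, v) \<in> G\<^sup>*)"

text \<open>G contains an m-wheel: a subgraph isomorphic to W_m, i.e. a center v and
m distinct vertices c 0, ..., c (m-1), all different from v, such that
c i -> c ((i+1) mod m) are arcs (a loop when m = 1) and v -> c i are arcs.\<close>
definition contains_wheel :: "('n \<times> 'n) set \<Rightarrow> nat \<Rightarrow> bool" where
  "contains_wheel G m \<longleftrightarrow> m \<ge> 1 \<and>
     (\<exists>v c. inj_on c {0..<m} \<and> v \<notin> c ` {0..<m} \<and>
        (\<forall>i<m. (c i, c (Suc i mod m)) \<in> G \<and> (v, c i) \<in> G))"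

definition depends_on :: "(('n \<Rightarrow> bool) \<Rightarrow> ('n \<Rightarrow> bool)) \<Rightarrow> 'n \<Rightarrow> 'n \<Rightarrow> bool" where
  "depends_on f i j \<longleftrightarrow> (\<exists>x. f x i \<noteq> f (x(j := \<not> x j)) i)"

definition interaction_graph :: "(('n \<Rightarrow> bool) \<Rightarrow> ('n \<Rightarrow> bool)) \<Rightarrow> ('n \<times> 'n) set" where
  "interaction_graph f = {(j, i). depends_on f i j}"

definition admits :: "('n \<times> 'n) set \<Rightarrow> (('n \<Rightarrow> bool) \<Rightarrow> ('n \<Rightarrow> bool)) \<Rightarrow> bool" where
  "admits G f \<longleftrightarrow> interaction_graph f = G"

definition nilpotent_class_le :: "(('n \<Rightarrow> bool) \<Rightarrow> ('n \<Rightarrow> bool)) \<Rightarrow> nat \<Rightarrow> bool" where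
  "nilpotent_class_le f k \<longleftrightarrow> (\<exists>j\<le>k. \<exists>c. \<forall>x. (f ^^ j) x = c)"

end

theory Submission
  imports Defs
begin


definition FF :: "('n \<times> 'n) set \<Rightarrow> ('n \<Rightarrow> 'n \<Rightarrow> bool) \<Rightarrow> ('n \<Rightarrow> bool) \<Rightarrow> ('n \<Rightarrow> bool)" where
  "FF G s x i = (\<forall>j. (j,i) \<in> G \<longrightarrow> x j = s j i)"

lemma FF_admits: "admits G (FF G s)"
proof -
  have "interaction_graph (FF G s) = G"
  proof
    show "interaction_graph (FF G s) \<subseteq> G"
    proof
      fix p assume "p \<in> interaction_graph (FF G s)"
      then obtain j i where p: "p = (j,i)" and "depends_on (FF G s) i j"
        unfolding interaction_graph_def by auto
      then obtain x where x: "FF G s x i \<noteq> FF G s (x(j := \<not> x j)) i"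
        unfolding depends_on_def by auto
      show "p \<in> G"
      proof (rule ccontr)
        assume "p \<notin> G"
        then have "FF G s x i = FF G s (x(j := \<not> x j)) i"
          unfolding FF_def p by (metis fun_upd_other)
        with x show False by simp
      qed
    qed
    show "G \<subseteq> interaction_graph (FF G s)"
    proof
      fix p assume pG: "p \<in> G"
      obtain j i where p: "p = (j,i)" by fastforce
      let ?x = "\<lambda>k. s k i"
      have "FF G s ?x i" unfolding FF_def by simp
      moreover have "\<not> FF G s (?x(j := \<not> ?x j)) i"
        unfolding FF_def using pG p by auto
      ultimately have "depends_on (FF G s) i j" unfolding depends_on_def by blast
      then show "p \<in> interaction_graph (FF G s)" unfolding interaction_graph_def p by simp
    qed
  qed
  then show ?thesis unfolding admits_def .
qed

definition traj where "traj G s x0 t = (FF G s ^^ t) x0"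

lemma traj_Suc: "traj G s x0 (Suc t) = FF G s (traj G s x0 t)"
  unfolding traj_def by simp

lemma pos_back: "traj G s x0 (Suc t) i \<Longrightarrow> (j,i) \<in> G \<Longrightarrow> traj G s x0 t j = s j i"
  unfolding traj_Suc FF_def by auto

lemma neg_fwd: "(j,i) \<in> G \<Longrightarrow> traj G s x0 t j \<noteq> s j i \<Longrightarrow> \<not> traj G s x0 (Suc t) i"
  unfolding traj_Suc FF_def by auto

lemma wire_back: "\<not> traj G s x0 (Suc t) i \<Longrightarrow> (\<forall>j. (j,i) \<in> G \<longrightarrow> j = q) \<Longrightarrow> traj G s x0 t q \<noteq> s q i"
  unfolding traj_Suc FF_def by auto

lemma relpow_mono': "(A::('a\<times>'a) set) \<subseteq> B \<Longrightarrow> A ^^ k \<subseteq> B ^^ k"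
proof (induction k)
  case 0 then show ?case by (simp only: relpow.simps(1) order_refl)
next
  case (Suc k) then show ?case using relcomp_mono[of "A ^^ k" "B ^^ k" A B] by (simp only: relpow.simps(2))
qed

lemma relpow_avoid:
  "(x,y) \<in> E ^^ k \<Longrightarrow> (x,y) \<in> (E - {(a,b)}) ^^ k \<or>
     (\<exists>j1 j2. j1 + 1 + j2 = k \<and> (x,a) \<in> E ^^ j1 \<and> (b,y) \<in> E ^^ j2)"
proof (induction k arbitrary: y)
  case 0 then show ?case by simp
next
  case (Suc k)
  then obtain z where xz: "(x,z) \<in> E ^^ k" and zy: "(z,y) \<in> E" by auto
  from Suc.IH[OF xz] show ?case
  proof
    assume P: "(x, z) \<in> (E - {(a, b)}) ^^ k"
    show ?case
    proof (cases "(z,y) = (a,b)")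
      case True
      have "(x,a) \<in> E ^^ k" using P True relpow_mono'[of "E - {(a,b)}" E k] by auto
      then have "(b,y) \<in> E ^^ 0" "k + 1 + 0 = Suc k" using True by auto
      then show ?thesis using \<open>(x,a) \<in> E ^^ k\<close> by blast
    next
      case False
      then have "(x,y) \<in> (E - {(a, b)}) ^^ Suc k" using P zy by auto
      then show ?thesis by blast
    qed
  next
    assume "\<exists>j1 j2. j1 + 1 + j2 = k \<and> (x, a) \<in> E ^^ j1 \<and> (b, z) \<in> E ^^ j2"
    then obtain j1 j2 where "j1 + 1 + j2 = k" "(x, a) \<in> E ^^ j1" "(b, z) \<in> E ^^ j2" by blast
    then have "j1 + 1 + Suc j2 = Suc k" "(b,y) \<in> E ^^ Suc j2" using zy by auto
    then show ?thesis using \<open>(x, a) \<in> E ^^ j1\<close> by blast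
  qed
qed



definition dto :: "('n\<times>'n) set \<Rightarrow> 'n \<Rightarrow> 'n \<Rightarrow> nat" where
  "dto P h x = (LEAST k. (x,h) \<in> P ^^ k)"

lemma dto_walk: "(x,h) \<in> P\<^sup>* \<Longrightarrow> (x,h) \<in> P ^^ dto P h x"
  unfolding dto_def by (rule LeastI_ex) (simp add: rtrancl_power)

lemma dto_le: "(x,h) \<in> P ^^ k \<Longrightarrow> dto P h x \<le> k"
  unfolding dto_def by (rule Least_le)

lemma layer:
  assumes "(x,h) \<in> P\<^sup>*" "l \<le> dto P h x"
  shows "\<exists>y. (y,h) \<in> P\<^sup>* \<and> dto P h y = l"
proof -
  let ?d = "dto P h x"
  have "(x,h) \<in> P ^^ ((?d - l) + l)" using dto_walk[OF assms(1)] assms(2) by simp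
  then obtain y where xy: "(x,y) \<in> P ^^ (?d - l)" and yh: "(y,h) \<in> P ^^ l"
    by (auto simp: relpow_add)
  have yr: "(y,h) \<in> P\<^sup>*" using yh by (auto simp: rtrancl_power)
  have "dto P h y \<le> l" using dto_le[OF yh] .
  moreover have "\<not> dto P h y < l"
  proof
    assume lt: "dto P h y < l"
    have "(x,h) \<in> P ^^ ((?d - l) + dto P h y)"
      using xy dto_walk[OF yr] by (auto simp: relpow_add)
    then have "?d \<le> (?d - l) + dto P h y" by (rule dto_le)
    with lt assms(2) show False by linarith
  qed
  ultimately show ?thesis using yr by auto
qed

lemma layer_card:
  fixes x h :: "'n::finite"
  assumes "(x,h) \<in> P\<^sup>*"
  shows "Suc (dto P h x) \<le> card {y. (y,h) \<in> P\<^sup>* \<and> dto P h y \<le> dto P h x}"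
proof -
  let ?L = "{y. (y,h) \<in> P\<^sup>* \<and> dto P h y \<le> dto P h x}"
  have "{0..dto P h x} \<subseteq> dto P h ` ?L"
  proof
    fix l assume "l \<in> {0..dto P h x}"
    then obtain y where "(y,h) \<in> P\<^sup>*" "dto P h y = l" using layer[OF assms] by auto
    then show "l \<in> dto P h ` ?L" using \<open>l \<in> {0..dto P h x}\<close> by force
  qed
  then have "card {0..dto P h x} \<le> card (dto P h ` ?L)" by (rule card_mono[rotated]) simp
  also have "\<dots> \<le> card ?L" by (rule card_image_le) simp
  finally show ?thesis by simp
qed

lemma dto_less:
  fixes x h :: "'n::finite"
  assumes "(x,h) \<in> P\<^sup>*"
  shows "dto P h x < card (UNIV :: 'n set)"
proof -
  have "Suc (dto P h x) \<le> card {y. (y,h) \<in> P\<^sup>* \<and> dto P h y \<le> dto P h x}" by (rule layer_card[OF assms])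
  also have "\<dots> \<le> card (UNIV :: 'n set)" by (rule card_mono) auto
  finally show ?thesis by simp
qed

lemma crossing:
  assumes "R \<subseteq> A" "i \<notin> A" "r \<in> R" "(r,i) \<in> P\<^sup>*"
  shows "\<exists>j k. (j,k) \<in> P \<and> j \<in> A \<and> k \<notin> A"
  using assms(4,2)
proof (induction rule: rtrancl_induct)
  case base then show ?case using assms by auto
next
  case (step y z)
  then show ?case by blast
qed

lemma phase2:
  fixes G :: "('n::finite \<times> 'n) set"
  assumes reach: "\<forall>i. \<exists>r\<in>R. (r,i) \<in> {(j,i). (j,i) \<in> G \<and> s j i}\<^sup>*"
    and dead: "\<forall>t\<ge>t0. \<forall>r\<in>R. \<not> traj G s x0 t r"
  shows "\<forall>t \<ge> t0 + (card (UNIV::'n set) - card R). \<forall>i. \<not> traj G s x0 t i"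
proof -
  let ?P = "{(j,i). (j,i) \<in> G \<and> s j i}"
  define A where "A k = {i. \<forall>t\<ge>t0+k. \<not> traj G s x0 t i}" for k
  have R0: "R \<subseteq> A 0" using dead unfolding A_def by auto
  have mono: "A k \<subseteq> A (Suc k)" for k unfolding A_def by auto
  have propg: "k' \<in> A (Suc k)" if "j \<in> A k" "(j,k') \<in> ?P" for j k k'
  proof -
    have "\<not> traj G s x0 t k'" if "t \<ge> t0 + Suc k" for t
    proof -
      obtain t' where t': "t = Suc t'" "t' \<ge> t0 + k" using \<open>t \<ge> t0 + Suc k\<close> by (cases t) auto
      have "\<not> traj G s x0 t' j" using \<open>j \<in> A k\<close> t' unfolding A_def by auto
      then show ?thesis using neg_fwd[of j k' G s x0 t'] that \<open>(j,k') \<in> ?P\<close> t' by auto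
    qed
    then show ?thesis unfolding A_def by auto
  qed
  have Rsub: "R \<subseteq> A k" for k
  proof (induction k)
    case 0 then show ?case using R0 .
  next
    case (Suc k) then show ?case using mono by blast
  qed
  have cardA: "min (card (UNIV::'n set)) (card R + k) \<le> card (A k)" for k
  proof (induction k)
    case 0 then show ?case using card_mono[OF _ R0] by simp
  next
    case (Suc k)
    show ?case
    proof (cases "A k = UNIV")
      case True
      then have "A (Suc k) = UNIV" using mono[of k] by auto
      then show ?thesis by simp
    next
      case False
      then obtain i where "i \<notin> A k" by auto
      obtain r where "r \<in> R" "(r,i) \<in> ?P\<^sup>*" using reach by blast
      then obtain j k' where "(j,k') \<in> ?P" "j \<in> A k" "k' \<notin> A k"
        using crossing[OF Rsub \<open>i \<notin> A k\<close>] by blast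
      then have "insert k' (A k) \<subseteq> A (Suc k)" using propg mono by blast
      then have "card (insert k' (A k)) \<le> card (A (Suc k))" by (rule card_mono[rotated]) simp
      then have "Suc (card (A k)) \<le> card (A (Suc k))" using \<open>k' \<notin> A k\<close> by simp
      then show ?thesis using Suc.IH by linarith
    qed
  qed
  let ?K = "card (UNIV::'n set) - card R"
  have "card R \<le> card (UNIV::'n set)" by (rule card_mono) auto
  then have "card (UNIV::'n set) \<le> card (A ?K)" using cardA[of ?K] by simp
  then have "A ?K = UNIV" by (metis card_seteq finite_UNIV top_greatest)
  then show ?thesis unfolding A_def by auto
qed



definition wire :: "('n\<times>'n) set \<Rightarrow> 'n set \<Rightarrow> 'n \<Rightarrow> bool" where
  "wire G R x = (x \<notin> R \<and> (\<exists>!j. (j,x) \<in> G))"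

definition par :: "('n\<times>'n) set \<Rightarrow> 'n \<Rightarrow> 'n" where
  "par G x = (THE j. (j,x) \<in> G)"

definition distR :: "('n\<times>'n) set \<Rightarrow> 'n set \<Rightarrow> 'n \<Rightarrow> nat" where
  "distR G R x = (LEAST k. \<exists>r\<in>R. (r,x) \<in> G ^^ k)"

lemma wire_par: "wire G R x \<Longrightarrow> (par G x, x) \<in> G \<and> (\<forall>j. (j,x) \<in> G \<longrightarrow> j = par G x)"
  unfolding wire_def par_def by (metis (mono_tags, lifting) theI)

lemma distR_dec:
  assumes "\<exists>r\<in>R. (r,x) \<in> G\<^sup>*" "wire G R x"
  shows "distR G R (par G x) < distR G R x"
proof -
  have ex: "\<exists>k. \<exists>r\<in>R. (r,x) \<in> G ^^ k" using assms(1) by (auto simp: rtrancl_power)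
  let ?k = "distR G R x"
  have "\<exists>r\<in>R. (r,x) \<in> G ^^ ?k" unfolding distR_def by (rule LeastI_ex[OF ex])
  then obtain r where r: "r \<in> R" "(r,x) \<in> G ^^ ?k" by blast
  have "?k \<noteq> 0"
  proof
    assume "?k = 0"
    then have "r = x" using r(2) by simp
    then show False using r(1) assms(2) unfolding wire_def by auto
  qed
  then obtain k' where k': "?k = Suc k'" by (cases ?k) auto
  then obtain y where "(r,y) \<in> G ^^ k'" "(y,x) \<in> G" using r by auto
  then have "y = par G x" using wire_par[OF assms(2)] by auto
  then have "distR G R (par G x) \<le> k'" unfolding distR_def
    using \<open>(r,y) \<in> G ^^ k'\<close> r(1) by (metis (mono_tags, lifting) Least_le)
  then show ?thesis using k' by simp
qed

lemma chain_Suc: "(par G ^^ Suc i) a = par G ((par G ^^ i) a)" by simp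

lemma chain_dec:
  assumes reach: "\<forall>x. \<exists>r\<in>R. (r,x) \<in> G\<^sup>*"
  shows "(\<forall>i'<i. wire G R ((par G ^^ i') a)) \<Longrightarrow> distR G R ((par G ^^ i) a) + i \<le> distR G R a"
proof (induction i)
  case 0 then show ?case by simp
next
  case (Suc i)
  then have "distR G R ((par G ^^ i) a) + i \<le> distR G R a" by auto
  moreover have "distR G R ((par G ^^ Suc i) a) < distR G R ((par G ^^ i) a)"
    using distR_dec[OF reach[rule_format] Suc.prems[rule_format, of i]] by simp
  ultimately show ?case by simp
qed

lemma chain_ends:
  assumes reach: "\<forall>x. \<exists>r\<in>R. (r,x) \<in> G\<^sup>*"
  shows "\<exists>i. \<not> wire G R ((par G ^^ i) a)"
proof (rule ccontr)
  assume "\<not> ?thesis"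
  then have "\<forall>i'<Suc (distR G R a). wire G R ((par G ^^ i') a)" by auto
  from chain_dec[OF reach this] show False by simp
qed

lemma chain_inj:
  assumes reach: "\<forall>x. \<exists>r\<in>R. (r,x) \<in> G\<^sup>*"
    and pre: "\<forall>i'<i. wire G R ((par G ^^ i') a)"
  shows "inj_on (\<lambda>j. (par G ^^ j) a) {..<i}"
proof -
  let ?g = "\<lambda>j. distR G R ((par G ^^ j) a)"
  have dec: "?g (Suc j) < ?g j" if "j < i" for j
    using distR_dec[OF reach[rule_format] pre[rule_format, OF that]] by simp
  have lt: "?g j2 < ?g j1" if "j1 < j2" "j2 \<le> i" for j1 j2
    using that
  proof (induction j2)
    case 0 then show ?case by simp
  next
    case (Suc j2)
    show ?case
    proof (cases "j1 = j2")
      case True then show ?thesis using dec Suc.prems by simp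
    next
      case False
      then have "?g j2 < ?g j1" using Suc by simp
      moreover have "?g (Suc j2) < ?g j2" using dec Suc.prems by simp
      ultimately show ?thesis by simp
    qed
  qed
  show ?thesis
  proof (rule inj_onI)
    fix x y assume "x \<in> {..<i}" "y \<in> {..<i}" and eq: "(par G ^^ x) a = (par G ^^ y) a"
    show "x = y"
    proof (rule ccontr)
      assume "x \<noteq> y"
      then consider "x < y" | "y < x" by linarith
      then show False
      proof cases
        case 1 then show False using lt[of x y] eq \<open>y \<in> {..<i}\<close> by simp
      next
        case 2 then show False using lt[of y x] eq \<open>x \<in> {..<i}\<close> by simp
      qed
    qed
  qed
qed

lemma anti:
  assumes hub: "\<forall>t\<le>N. traj G s x0 t h"
  shows "(x,h) \<in> {(j,i). (j,i) \<in> G \<and> s j i} ^^ k \<Longrightarrow> t + k \<le> N \<Longrightarrow> traj G s x0 t x"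
proof (induction k arbitrary: x t)
  case 0 then show ?case using hub by simp
next
  case (Suc k)
  obtain y where xy: "(x,y) \<in> {(j,i). (j,i) \<in> G \<and> s j i}" and yh: "(y,h) \<in> {(j,i). (j,i) \<in> G \<and> s j i} ^^ k"
    by (rule relpow_Suc_E2[OF Suc.prems(1)])
  have "t + 1 + k \<le> N" using Suc.prems(2) by simp
  then have "traj G s x0 (Suc t) y" using Suc.IH[OF yh, of "Suc t"] by simp
  moreover have "(x,y) \<in> G" "s x y" using xy by auto
  ultimately show ?case using pos_back[of G s x0 t y x] by simp
qed

definition sd :: "'n \<Rightarrow> 'n \<Rightarrow> 'n \<Rightarrow> 'n \<Rightarrow> bool" where
  "sd a b = (\<lambda>j i. (j,i) \<noteq> (a,b))"

lemma sd_P: "{(j,i). (j,i) \<in> G \<and> sd a b j i} = G - {(a,b)}"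
  unfolding sd_def by auto

lemma chain_zero:
  assumes hub: "\<forall>t\<le>N. traj G (sd a b) x0 t h"
    and bh: "(b,h) \<in> (G - {(a,b)}) ^^ kb"
    and ab: "(a,b) \<in> G"
    and bnw: "\<not> wire G R b"
  shows "(\<forall>i'<i. wire G R ((par G ^^ i') a)) \<Longrightarrow> t + i + kb + 1 \<le> N \<Longrightarrow> \<not> traj G (sd a b) x0 t ((par G ^^ i) a)"
proof (induction i arbitrary: t)
  case 0
  have "traj G (sd a b) x0 (Suc t) b"
    using anti[OF hub, of b kb "Suc t"] bh 0(2) unfolding sd_P by simp
  then have "traj G (sd a b) x0 t a = sd a b a b" using pos_back[of G "sd a b" x0 t b a] ab by simp
  then show ?case by (simp add: sd_def)
next
  case (Suc i)
  let ?c = "(par G ^^ i) a"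
  have w: "wire G R ?c" using Suc.prems by auto
  have nt: "\<not> traj G (sd a b) x0 (Suc t) ?c" using Suc.IH[of "Suc t"] Suc.prems by auto
  have "?c \<noteq> b" using w bnw by auto
  have "traj G (sd a b) x0 t (par G ?c) \<noteq> sd a b (par G ?c) ?c"
    using wire_back[OF nt, of "par G ?c"] wire_par[OF w] by simp
  then show ?case using \<open>?c \<noteq> b\<close> by (simp add: sd_def)
qed


lemma case1:
  fixes G :: "('n::finite \<times> 'n) set"
  assumes hub: "\<forall>t\<le>card (UNIV::'n set). traj G (sd a b) x0 t h"
    and bh: "(b,h) \<in> (G - {(a,b)})\<^sup>*"
    and ab: "(a,b) \<in> G"
    and bnw: "\<not> wire G R b"
    and reach: "\<forall>x. \<exists>r\<in>R. (r,x) \<in> G\<^sup>*"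
    and ex: "\<exists>i. (\<forall>i'<i. wire G R ((par G ^^ i') a)) \<and> ((par G ^^ i) a, h) \<in> (G - {(a,b)})\<^sup>*"
  shows False
proof -
  let ?P = "G - {(a,b)}"
  let ?ch = "\<lambda>j. (par G ^^ j) a"
  let ?N = "card (UNIV::'n set)"
  define i where "i = (LEAST i. (\<forall>i'<i. wire G R (?ch i')) \<and> (?ch i, h) \<in> ?P\<^sup>*)"
  have iP: "(\<forall>i'<i. wire G R (?ch i')) \<and> (?ch i, h) \<in> ?P\<^sup>*"
    unfolding i_def by (rule LeastI_ex[OF ex])
  have notQ: "(?ch i', h) \<notin> ?P\<^sup>*" if "i' < i" for i'
  proof
    assume "(?ch i', h) \<in> ?P\<^sup>*"
    then have "(\<forall>i''<i'. wire G R (?ch i'')) \<and> (?ch i', h) \<in> ?P\<^sup>*" using iP that by auto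
    then have "i \<le> i'" unfolding i_def by (rule Least_le)
    with that show False by simp
  qed
  let ?kb = "dto ?P h b"
  let ?L = "{y. (y,h) \<in> ?P\<^sup>* \<and> dto ?P h y \<le> ?kb}"
  let ?C1 = "?ch ` {..<i}"
  have c1: "card ?C1 = i" using chain_inj[OF reach] iP by (simp add: card_image)
  have cL: "Suc ?kb \<le> card ?L" by (rule layer_card[OF bh])
  have disj: "?C1 \<inter> ?L = {}" using notQ by auto
  have "card (?C1 \<union> ?L) = card ?C1 + card ?L" using disj by (simp add: card_Un_disjoint)
  moreover have "card (?C1 \<union> ?L) \<le> ?N" by (rule card_mono) auto
  ultimately have bound: "i + ?kb + 1 \<le> ?N" using c1 cL by linarith
  have "\<not> traj G (sd a b) x0 0 (?ch i)"
    using chain_zero[OF hub dto_walk[OF bh] ab bnw] iP bound by auto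
  moreover have "traj G (sd a b) x0 0 (?ch i)"
    using anti[OF hub, of "?ch i" "dto ?P h (?ch i)" 0] dto_walk[of "?ch i" h ?P] iP
      dto_less[of "?ch i" h ?P] by (simp add: sd_P)
  ultimately show False by simp
qed




lemma shortcut:
  assumes "(w,h) \<in> G\<^sup>*" "dto G h w \<le> dto G h b"
  shows "(w,h) \<in> (G - {(a,b)})\<^sup>*"
proof -
  have "(w,h) \<in> G ^^ dto G h w" by (rule dto_walk[OF assms(1)])
  from relpow_avoid[OF this, of a b] show ?thesis
  proof
    assume "(w, h) \<in> (G - {(a, b)}) ^^ dto G h w"
    then show ?thesis by (auto simp: rtrancl_power)
  next
    assume "\<exists>j1 j2. j1 + 1 + j2 = dto G h w \<and> (w, a) \<in> G ^^ j1 \<and> (b, h) \<in> G ^^ j2"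
    then obtain j1 j2 where "j1 + 1 + j2 = dto G h w" "(b, h) \<in> G ^^ j2" by blast
    then have "dto G h b \<le> j2" by (simp add: dto_le)
    with \<open>j1 + 1 + j2 = dto G h w\<close> assms(2) show ?thesis by linarith
  qed
qed

lemma reach_P:
  assumes SC: "\<forall>u v. (u,v) \<in> G\<^sup>*" and r0: "r0 \<in> R"
    and neg: "\<forall>j i. (j,i) \<in> G \<longrightarrow> \<not> s j i \<longrightarrow> (\<exists>r\<in>R. (r,i) \<in> {(j,i). (j,i) \<in> G \<and> s j i}\<^sup>*)"
  shows "\<forall>i. \<exists>r\<in>R. (r,i) \<in> {(j,i). (j,i) \<in> G \<and> s j i}\<^sup>*"
proof
  fix i
  have "(r0,i) \<in> G\<^sup>*" using SC by blast
  then show "\<exists>r\<in>R. (r,i) \<in> {(j,i). (j,i) \<in> G \<and> s j i}\<^sup>*"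
  proof (induction rule: rtrancl_induct)
    case base then show ?case using r0 by blast
  next
    case (step y z)
    show ?case
    proof (cases "s y z")
      case True
      then obtain r where "r \<in> R" "(r,y) \<in> {(j,i). (j,i) \<in> G \<and> s j i}\<^sup>*" using step by blast
      moreover have "(y,z) \<in> {(j,i). (j,i) \<in> G \<and> s j i}" using True step(2) by simp
      ultimately show ?thesis by (meson rtrancl.rtrancl_into_rtrancl)
    next
      case False then show ?thesis using neg step(2) by blast
    qed
  qed
qed

lemma other_in:
  assumes SC: "\<forall>u v. (u,v) \<in> G\<^sup>*" and x: "x \<noteq> r"
  shows "\<exists>a. a \<noteq> r \<and> (a,r) \<in> G"
proof (rule ccontr)
  assume H: "\<not> ?thesis"
  have "(x,r) \<in> G\<^sup>*" using SC by blast
  then have "x = r"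
  proof (induction rule: converse_rtrancl_induct)
    case base then show ?case by simp
  next
    case (step y z)
    then show ?case using H by blast
  qed
  with x show False by simp
qed

lemma nil_of_dead:
  assumes "\<forall>x0. \<forall>i. \<not> traj G s x0 K i"
  shows "nilpotent_class_le (FF G s) K"
proof -
  have "\<forall>x. (FF G s ^^ K) x = (\<lambda>_. False)"
    using assms unfolding traj_def by auto
  then show ?thesis unfolding nilpotent_class_le_def by blast
qed

lemma loop_case:
  fixes G :: "('n::finite \<times> 'n) set"
  assumes n2: "card (UNIV::'n set) \<ge> 2" and SC: "\<forall>u v. (u,v) \<in> G\<^sup>*" and loop: "(r,r) \<in> G"
  shows "\<exists>f. admits G f \<and> nilpotent_class_le f (2 * card (UNIV::'n set) - 1)"
proof -
  let ?N = "card (UNIV::'n set)"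
  let ?R = "{r}"
  let ?d = "dto G r"
  let ?S = "{x. x \<notin> ?R \<and> \<not> wire G ?R x}"
  have reachR: "\<forall>x. \<exists>r'\<in>?R. (r',x) \<in> G\<^sup>*" using SC by blast
  obtain a b where ab: "(a,b) \<in> G" and abr: "(a,b) \<noteq> (r,r)" and bnw: "\<not> wire G ?R b"
    and rb: "(r,b) \<in> (G - {(a,b)})\<^sup>*" and maxb: "\<forall>w\<in>?S. ?d w \<le> ?d b"
  proof (cases "?S = {}")
    case True
    obtain x :: 'n where "x \<noteq> r"
    proof -
      have "\<not> (UNIV::'n set) \<subseteq> {r}"
      proof
        assume "(UNIV::'n set) \<subseteq> {r}"
        then have "card (UNIV::'n set) \<le> card {r}" by (rule card_mono[rotated]) simp
        with n2 show False by simp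
      qed
      then show ?thesis using that by blast
    qed
    then obtain a where "a \<noteq> r" "(a,r) \<in> G" using other_in[OF SC] by blast
    show ?thesis
      apply (rule that[of a r])
      using \<open>a \<noteq> r\<close> \<open>(a,r) \<in> G\<close> True unfolding wire_def by auto
  next
    case False
    have "Max (?d ` ?S) \<in> ?d ` ?S" using False by (intro Max_in) auto
    then obtain b where bS: "b \<in> ?S" and bM: "?d b = Max (?d ` ?S)" by auto
    have bmax: "\<forall>w\<in>?S. ?d w \<le> ?d b" unfolding bM by (intro ballI Max_ge) auto
    have ex: "\<exists>k. \<exists>r'\<in>?R. (r',b) \<in> G ^^ k" using SC by (auto simp: rtrancl_power)
    let ?k = "distR G ?R b"
    have "\<exists>r'\<in>?R. (r',b) \<in> G ^^ ?k" unfolding distR_def by (rule LeastI_ex[OF ex])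
    then have rk: "(r,b) \<in> G ^^ ?k" by simp
    have "?k \<noteq> 0"
    proof
      assume "?k = 0"
      then have "r = b" using rk by simp
      then show False using bS by simp
    qed
    then obtain k' where k': "?k = Suc k'" by (cases ?k) auto
    then obtain p where rp: "(r,p) \<in> G ^^ k'" and pb: "(p,b) \<in> G" using rk by auto
    have "\<not> (\<exists>!j. (j,b) \<in> G)" using bS unfolding wire_def by auto
    then obtain a where ab: "(a,b) \<in> G" and ap: "a \<noteq> p" using pb by blast
    have rb: "(r,b) \<in> (G - {(a,b)})\<^sup>*"
    proof -
      from relpow_avoid[OF rp, of a b] show ?thesis
      proof
        assume "(r, p) \<in> (G - {(a, b)}) ^^ k'"
        moreover have "(p,b) \<in> G - {(a,b)}" using pb ap by auto
        ultimately have "(r,b) \<in> (G - {(a, b)}) ^^ Suc k'" by (rule relpow_Suc_I)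
        then show ?thesis using rtrancl_power by blast
      next
        assume "\<exists>j1 j2. j1 + 1 + j2 = k' \<and> (r, a) \<in> G ^^ j1 \<and> (b, p) \<in> G ^^ j2"
        then obtain j1 j2 where "j1 + 1 + j2 = k'" "(r,a) \<in> G ^^ j1" by blast
        then have "j1 < k'" "(r,a) \<in> G ^^ j1" by auto
        then have "(r,b) \<in> G ^^ Suc j1" using ab by auto
        then have "?k \<le> Suc j1" unfolding distR_def by (metis (mono_tags, lifting) Least_le singletonI)
        with \<open>j1 < k'\<close> k' show ?thesis by simp
      qed
    qed
    show ?thesis
      apply (rule that[of a b])
      using ab bS rb bmax by auto
  qed
  have bQ: "(b,r) \<in> (G - {(a,b)})\<^sup>*" using shortcut[of b r G b a] SC by blast
  let ?s = "sd a b"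
  have dead: "\<not> traj G ?s x0 t i" if "t \<ge> ?N + (?N - 1)" for x0 t i
  proof -
    have notn: "\<not> traj G ?s x0 ?N r"
    proof
      assume alive: "traj G ?s x0 ?N r"
      have bk: "traj G ?s x0 t r" if "t \<le> ?N" for t
        using that
      proof (induction "?N - t" arbitrary: t)
        case 0 then show ?case using alive by simp
      next
        case (Suc x)
        then have "traj G ?s x0 (Suc t) r" by simp
        then show ?case using pos_back[of G ?s x0 t r r] loop abr by (auto simp: sd_def)
      qed
      obtain k where k: "\<not> wire G ?R ((par G ^^ k) a)" "\<forall>i'<k. wire G ?R ((par G ^^ i') a)"
        using chain_ends[OF reachR, of a] exists_least_iff[of "\<lambda>i. \<not> wire G ?R ((par G ^^ i) a)"] by blast
      have "((par G ^^ k) a, r) \<in> (G - {(a,b)})\<^sup>*"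
      proof (cases "(par G ^^ k) a = r")
        case True then show ?thesis by simp
      next
        case False
        then have "(par G ^^ k) a \<in> ?S" using k by simp
        then have "?d ((par G ^^ k) a) \<le> ?d b" using maxb by blast
        moreover have "((par G ^^ k) a, r) \<in> G\<^sup>*" using SC by blast
        ultimately show ?thesis using shortcut[of "(par G ^^ k) a" r G b a] by blast
      qed
      then have ex: "\<exists>i. (\<forall>i'<i. wire G ?R ((par G ^^ i') a)) \<and> ((par G ^^ i) a, r) \<in> (G - {(a,b)})\<^sup>*"
        using k by blast
      have hub: "\<forall>t\<le>?N. traj G (sd a b) x0 t r" using bk by blast
      show False by (rule case1[OF hub bQ ab bnw reachR ex])
    qed
    have fwd: "\<not> traj G ?s x0 t r" if "t \<ge> ?N" for t
      using that
    proof (induction t)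
      case 0 then show ?case using notn by simp
    next
      case (Suc t)
      show ?case
      proof (cases "Suc t = ?N")
        case True then show ?thesis using notn by simp
      next
        case False
        then have "\<not> traj G ?s x0 t r" using Suc by simp
        then show ?thesis using neg_fwd[of r r G ?s x0 t] loop abr by (auto simp: sd_def)
      qed
    qed
    have reachP: "\<forall>i. \<exists>r'\<in>?R. (r',i) \<in> {(j,i). (j,i) \<in> G \<and> ?s j i}\<^sup>*"
      apply (rule reach_P[OF SC, of r])
      using rb unfolding sd_P by (auto simp: sd_def)
    have "card ?R = 1" by simp
    from phase2[OF reachP, of "?N" x0] fwd
    show ?thesis using that by auto
  qed
  have "nilpotent_class_le (FF G ?s) (2 * ?N - 1)"
    apply (rule nil_of_dead)
    using dead by (simp add: mult_2)
  then show ?thesis using FF_admits by blast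
qed



lemma cyc_idx: "(u::nat) < m \<Longrightarrow> j < m \<Longrightarrow> (u + (j + m - u) mod m) mod m = j"
proof -
  assume "u < m" "j < m"
  have "(u + (j + m - u) mod m) mod m = (u + (j + m - u)) mod m" by (rule mod_add_right_eq)
  also have "u + (j + m - u) = j + m" using \<open>u < m\<close> by simp
  also have "(j + m) mod m = j" using \<open>j < m\<close> by simp
  finally show ?thesis .
qed

lemma pred_idx: "(i::nat) < m \<Longrightarrow> Suc ((i + m - 1) mod m) mod m = i"
proof -
  assume "i < m"
  then have "Suc ((i + m - 1) mod m) mod m = Suc (i + m - 1) mod m" by (simp add: mod_Suc_eq)
  also have "Suc (i + m - 1) = i + m" using \<open>i < m\<close> by simp
  finally show ?thesis using \<open>i < m\<close> by simp
qed

lemma cyc_reach: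
  assumes cyc: "\<forall>i<m. (c i, c (Suc i mod m)) \<in> E" and u: "u < m" and j: "j < m"
  shows "(c u, c j) \<in> E\<^sup>*"
proof -
  have "(c u, c ((u + l) mod m)) \<in> E\<^sup>*" for l
  proof (induction l)
    case 0 then show ?case using u by simp
  next
    case (Suc l)
    have "(c ((u + l) mod m), c (Suc ((u + l) mod m) mod m)) \<in> E"
      using cyc u by (metis mod_less_divisor gr_implies_not0 neq0_conv)
    moreover have "Suc ((u + l) mod m) mod m = (u + Suc l) mod m" by (simp add: mod_Suc_eq)
    ultimately show ?case using Suc.IH by (metis rtrancl.rtrancl_into_rtrancl)
  qed
  from this[of "(j + m - u) mod m"] show ?thesis using cyc_idx[OF u j] by simp
qed

lemma cyc_back:
  assumes cyc: "\<forall>i<m. (c i, c (Suc i mod m)) \<in> G \<and> s (c i) (c (Suc i mod m))"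
    and i: "i < m" and X: "traj G s x0 (Suc t) (c i)"
  shows "traj G s x0 t (c ((i + m - 1) mod m))"
proof -
  let ?j = "(i + m - 1) mod m"
  have jm: "?j < m" using i by simp
  have "c (Suc ?j mod m) = c i" using pred_idx[OF i] by simp
  then have "(c ?j, c i) \<in> G" "s (c ?j) (c i)" using cyc jm by metis+
  then show ?thesis using pos_back[OF X, of "c ?j"] by simp
qed

lemma cyc_fwd:
  assumes cyc: "\<forall>i<m. (c i, c (Suc i mod m)) \<in> G \<and> s (c i) (c (Suc i mod m))"
    and dead: "\<forall>i<m. \<not> traj G s x0 t (c i)"
  shows "\<forall>i<m. \<not> traj G s x0 (Suc t) (c i)"
  using cyc_back[OF cyc] dead by (metis mod_less_divisor gr_implies_not0 neq0_conv)

lemma alive_back: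
  assumes cyc: "\<forall>i<m. (c i, c (Suc i mod m)) \<in> G \<and> s (c i) (c (Suc i mod m))"
    and al: "\<exists>i<m. traj G s x0 T (c i)"
  shows "t \<le> T \<Longrightarrow> \<exists>i<m. traj G s x0 t (c i)"
proof (induction "T - t" arbitrary: t)
  case 0 then show ?case using al by (metis diff_is_0_eq le_antisym)
next
  case (Suc x)
  then have "\<exists>i<m. traj G s x0 (Suc t) (c i)" by simp
  then show ?case using cyc_fwd[OF cyc] by blast
qed

lemma cyc_zero_prop:
  assumes cyc: "\<forall>i<m. (c i, c (Suc i mod m)) \<in> G \<and> s (c i) (c (Suc i mod m))"
    and w: "w < m" and z: "\<not> traj G s x0 t (c w)"
  shows "\<not> traj G s x0 (t + l) (c ((w + l) mod m))"
proof (induction l)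
  case 0 then show ?case using z w by simp
next
  case (Suc l)
  let ?j = "(w + l) mod m"
  have jm: "?j < m" using w by simp
  have "(c ?j, c (Suc ?j mod m)) \<in> G" "s (c ?j) (c (Suc ?j mod m))" using cyc jm by auto
  then have "\<not> traj G s x0 (Suc (t + l)) (c (Suc ?j mod m))"
    using neg_fwd[of "c ?j" "c (Suc ?j mod m)" G s x0 "t + l"] Suc.IH by simp
  moreover have "Suc ?j mod m = (w + Suc l) mod m" by (simp add: mod_Suc_eq)
  ultimately show ?case by simp
qed

lemma cyc_rule:
  assumes cyc: "\<forall>i<m. (c i, c (Suc i mod m)) \<in> G \<and> s (c i) (c (Suc i mod m))"
    and u: "u < m" and z: "\<forall>t<m. \<not> traj G s x0 t (c u)"
  shows "\<forall>i<m. \<not> traj G s x0 (m - 1) (c i)"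
proof (intro allI impI)
  fix i assume i: "i < m"
  let ?l = "(i + m - u) mod m"
  have lm: "?l < m" using u by simp
  have "\<not> traj G s x0 (m - 1 - ?l) (c u)" using z lm by simp
  from cyc_zero_prop[OF cyc u this, of ?l]
  have "\<not> traj G s x0 (m - 1 - ?l + ?l) (c ((u + ?l) mod m))" .
  moreover have "m - 1 - ?l + ?l = m - 1" using lm by simp
  ultimately show "\<not> traj G s x0 (m - 1) (c i)" using cyc_idx[OF u i] by simp
qed



lemma case2:
  fixes G :: "('n::finite \<times> 'n) set"
  assumes hub: "\<forall>t\<le>card (UNIV::'n set). traj G (sd a b) x0 t h"
    and bh: "(b,h) \<in> (G - {(a,b)})\<^sup>*" and ab: "(a,b) \<in> G" and bnw: "\<not> wire G R b"
    and reach: "\<forall>x. \<exists>r\<in>R. (r,x) \<in> G\<^sup>*"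
    and pre: "\<forall>i'<k. wire G R ((par G ^^ i') a)"
    and notQ: "\<forall>i'<k. ((par G ^^ i') a, h) \<notin> (G - {(a,b)})\<^sup>*"
    and RQ: "\<forall>r\<in>R. (r,h) \<notin> (G - {(a,b)})\<^sup>*"
  shows "\<forall>t < card R. \<not> traj G (sd a b) x0 t ((par G ^^ k) a)"
proof -
  let ?P = "G - {(a,b)}"
  let ?ch = "\<lambda>j. (par G ^^ j) a"
  let ?N = "card (UNIV::'n set)"
  let ?kb = "dto ?P h b"
  let ?L = "{y. (y,h) \<in> ?P\<^sup>* \<and> dto ?P h y \<le> ?kb}"
  let ?C1 = "?ch ` {..<k}"
  have c1: "card ?C1 = k" using chain_inj[OF reach pre] by (simp add: card_image)
  have cL: "Suc ?kb \<le> card ?L" by (rule layer_card[OF bh])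
  have d1: "?C1 \<inter> R = {}" using pre unfolding wire_def by auto
  have d2: "(?C1 \<union> R) \<inter> ?L = {}" using notQ RQ by auto
  have "card ((?C1 \<union> R) \<union> ?L) = card (?C1 \<union> R) + card ?L" using d2 by (simp add: card_Un_disjoint)
  moreover have "card (?C1 \<union> R) = card ?C1 + card R" using d1 by (simp add: card_Un_disjoint)
  moreover have "card ((?C1 \<union> R) \<union> ?L) \<le> ?N" by (rule card_mono) auto
  ultimately have bound: "k + card R + ?kb + 1 \<le> ?N" using c1 cL by linarith
  show ?thesis
  proof (intro allI impI)
    fix t assume "t < card R"
    then have "t + k + ?kb + 1 \<le> ?N" using bound by linarith
    then show "\<not> traj G (sd a b) x0 t (?ch k)"
      using chain_zero[OF hub dto_walk[OF bh] ab bnw pre] by blast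
  qed
qed

lemma wheel_finish:
  fixes G :: "('n::finite \<times> 'n) set" and c :: "nat \<Rightarrow> 'n"
  assumes cyc: "\<forall>i<m. (c i, c (Suc i mod m)) \<in> G \<and> s (c i) (c (Suc i mod m))"
    and reachP: "\<forall>i. \<exists>r\<in>c ` {0..<m}. (r,i) \<in> {(j,i). (j,i) \<in> G \<and> s j i}\<^sup>*"
    and notalive: "\<forall>x0. \<not>(\<exists>i<m. traj G s x0 (Suc (card (UNIV::'n set))) (c i))"
    and cardC: "card (c ` {0..<m}) = m" and mN: "m \<le> card (UNIV::'n set)"
  shows "nilpotent_class_le (FF G s) (2 * card (UNIV::'n set) + 1 - m)"
proof (rule nil_of_dead, intro allI)
  fix x0 i
  let ?N = "card (UNIV::'n set)"
  have fwd0: "t \<ge> Suc ?N \<longrightarrow> (\<forall>i<m. \<not> traj G s x0 t (c i))" for t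
  proof (induction t)
    case 0 then show ?case by simp
  next
    case (Suc t)
    show ?case
    proof (cases "Suc t = Suc ?N")
      case True then show ?thesis using notalive by metis
    next
      case False
      then show ?thesis using Suc cyc_fwd[OF cyc] by (metis le_SucE)
    qed
  qed
  have fwd: "\<forall>t\<ge>Suc ?N. \<forall>r\<in>c ` {0..<m}. \<not> traj G s x0 t r" using fwd0 by auto
  have "2 * ?N + 1 - m \<ge> Suc ?N + (?N - card (c ` {0..<m}))" using cardC mN by simp
  then show "\<not> traj G s x0 (2 * ?N + 1 - m) i"
    using phase2[OF reachP fwd] by blast
qed



lemma wheel_common:
  fixes G :: "('n::finite \<times> 'n) set" and c :: "nat \<Rightarrow> 'n"
  assumes SC: "\<forall>u v. (u,v) \<in> G\<^sup>*" and m2: "2 \<le> m" and inj: "inj_on c {0..<m}"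
    and vC: "v \<notin> c ` {0..<m}"
  shows "card (c ` {0..<m}) = m" "m + 1 \<le> card (UNIV::'n set)"
    "\<forall>x. \<exists>r\<in>c ` {0..<m}. (r,x) \<in> G\<^sup>*"
proof -
  show cC: "card (c ` {0..<m}) = m" using inj by (simp add: card_image)
  have "card (insert v (c ` {0..<m})) \<le> card (UNIV::'n set)" by (rule card_mono) auto
  then show "m + 1 \<le> card (UNIV::'n set)" using vC cC by simp
  have "c 0 \<in> c ` {0..<m}" using m2 by simp
  then show "\<forall>x. \<exists>r\<in>c ` {0..<m}. (r,x) \<in> G\<^sup>*" using SC by blast
qed

lemma wheel_B:
  fixes G :: "('n::finite \<times> 'n) set" and c :: "nat \<Rightarrow> 'n"
  assumes SC: "\<forall>u v. (u,v) \<in> G\<^sup>*" and m2: "2 \<le> m" and inj: "inj_on c {0..<m}"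
    and vC: "v \<notin> c ` {0..<m}"
    and arcs: "\<forall>i<m. (c i, c (Suc i mod m)) \<in> G \<and> (v, c i) \<in> G"
    and allwire: "\<forall>x. x \<notin> c ` {0..<m} \<longrightarrow> wire G (c ` {0..<m}) x"
  shows "\<exists>f. admits G f \<and> nilpotent_class_le f (2 * card (UNIV::'n set) + 1 - m)"
proof -
  let ?N = "card (UNIV::'n set)"
  let ?C = "c ` {0..<m}"
  note wc = wheel_common[OF SC m2 inj vC]
  define s where "s = (\<lambda>j i. \<not> (j = v \<and> i \<in> ?C))"
  have cyc: "\<forall>i<m. (c i, c (Suc i mod m)) \<in> G \<and> s (c i) (c (Suc i mod m))"
    using arcs vC unfolding s_def by auto
  have notalive: "\<forall>x0. \<not>(\<exists>i<m. traj G s x0 (Suc ?N) (c i))"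
  proof (intro allI notI)
    fix x0 assume al: "\<exists>i<m. traj G s x0 (Suc ?N) (c i)"
    have vdead: "\<not> traj G s x0 t v" if tN: "t \<le> ?N" for t
    proof -
      obtain i where i: "i < m" "traj G s x0 (Suc t) (c i)"
        using alive_back[OF cyc al, of "Suc t"] tN by auto
      have "traj G s x0 t v = s v (c i)" using pos_back[OF i(2)] arcs i(1) by blast
      then show ?thesis using i(1) unfolding s_def by auto
    qed
    let ?ch = "\<lambda>j. (par G ^^ j) v"
    obtain k where k: "\<not> wire G ?C (?ch k)" "\<forall>i'<k. wire G ?C (?ch i')"
      using chain_ends[OF wc(3), of v] exists_least_iff[of "\<lambda>i. \<not> wire G ?C (?ch i)"] by blast
    have zero: "i \<le> k \<Longrightarrow> t + i \<le> ?N \<Longrightarrow> \<not> traj G s x0 t (?ch i)" for i t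
    proof (induction i arbitrary: t)
      case 0 then show ?case using vdead by simp
    next
      case (Suc i)
      have w: "wire G ?C (?ch i)" using k Suc.prems by auto
      have nt: "\<not> traj G s x0 (Suc t) (?ch i)" using Suc.IH[of "Suc t"] Suc.prems by auto
      have "traj G s x0 t (par G (?ch i)) \<noteq> s (par G (?ch i)) (?ch i)"
        using wire_back[OF nt, of "par G (?ch i)"] wire_par[OF w] by simp
      moreover have "?ch i \<notin> ?C" using w unfolding wire_def by blast
      ultimately show ?case unfolding s_def by simp
    qed
    have kC: "?ch k \<in> ?C" using k(1) allwire by blast
    then obtain u where u: "u < m" "?ch k = c u" by auto
    have c1: "card (?ch ` {..<k}) = k" using chain_inj[OF wc(3) k(2)] by (simp add: card_image)
    have d1: "?ch ` {..<k} \<inter> ?C = {}" using k(2) unfolding wire_def by auto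
    have "card (?ch ` {..<k} \<union> ?C) = k + m" using d1 c1 wc(1) by (simp add: card_Un_disjoint)
    moreover have "card (?ch ` {..<k} \<union> ?C) \<le> ?N" by (rule card_mono) auto
    ultimately have km: "k + m \<le> ?N" by simp
    have "\<forall>t<m. \<not> traj G s x0 t (c u)"
      using zero[of k] km u by auto
    from cyc_rule[OF cyc u(1) this] have "\<forall>i<m. \<not> traj G s x0 (m - 1) (c i)" .
    moreover have "\<exists>i<m. traj G s x0 (m - 1) (c i)" using alive_back[OF cyc al, of "m - 1"] wc(2) by simp
    ultimately show False by blast
  qed
  have reachP: "\<forall>i. \<exists>r\<in>?C. (r,i) \<in> {(j,i). (j,i) \<in> G \<and> s j i}\<^sup>*"
    apply (rule reach_P[OF SC, of "c 0"])
    using m2 unfolding s_def by auto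
  have "nilpotent_class_le (FF G s) (2 * ?N + 1 - m)"
    by (rule wheel_finish[OF cyc reachP notalive wc(1)]) (use wc(2) in simp)
  then show ?thesis using FF_admits by blast
qed



lemma wheel_A:
  fixes G :: "('n::finite \<times> 'n) set" and c :: "nat \<Rightarrow> 'n"
  assumes SC: "\<forall>u v. (u,v) \<in> G\<^sup>*" and m2: "2 \<le> m" and inj: "inj_on c {0..<m}"
    and vC: "v \<notin> c ` {0..<m}"
    and arcs: "\<forall>i<m. (c i, c (Suc i mod m)) \<in> G \<and> (v, c i) \<in> G"
    and Sne: "S \<noteq> {}"
    and W_def: "W = {(c i, c (Suc i mod m)) | i. i < m} \<union> {(v, c i) | i. i < m}"
    and S_def: "S = {x. x \<notin> c ` {0..<m} \<and> \<not> wire G (c ` {0..<m}) x}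
                  \<union> {x. x \<in> c ` {0..<m} \<and> (\<exists>a. (a,x) \<in> G \<and> (a,x) \<notin> W)}"
  shows "\<exists>f. admits G f \<and> nilpotent_class_le f (2 * card (UNIV::'n set) + 1 - m)"
proof -
  let ?N = "card (UNIV::'n set)"
  let ?C = "c ` {0..<m}"
  let ?d = "dto G v"
  note wc = wheel_common[OF SC m2 inj vC]
  have "Max (?d ` S) \<in> ?d ` S" using Sne by (intro Max_in) auto
  then obtain b where bS: "b \<in> S" and bM: "?d b = Max (?d ` S)" by auto
  have bmax: "\<forall>w\<in>S. ?d w \<le> ?d b" unfolding bM by (intro ballI Max_ge) auto
  obtain a where ab: "(a,b) \<in> G" and abW: "(a,b) \<notin> W" and bnw: "\<not> wire G ?C b"
    and rb: "\<exists>r\<in>?C. (r,b) \<in> (G - {(a,b)})\<^sup>*"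
  proof (cases "b \<in> ?C")
    case True
    then obtain a where "(a,b) \<in> G" "(a,b) \<notin> W" using bS unfolding S_def by blast
    moreover have "\<not> wire G ?C b" using True unfolding wire_def by simp
    moreover have "\<exists>r\<in>?C. (r,b) \<in> (G - {(a,b)})\<^sup>*" using True by blast
    ultimately show ?thesis using that by blast
  next
    case False
    then have bnw: "\<not> wire G ?C b" using bS unfolding S_def by blast
    have ex: "\<exists>k. \<exists>r'\<in>?C. (r',b) \<in> G ^^ k" using wc(3) by (meson rtrancl_power)
    let ?k = "distR G ?C b"
    have "\<exists>r'\<in>?C. (r',b) \<in> G ^^ ?k" unfolding distR_def by (rule LeastI_ex[OF ex])
    then obtain r where rC: "r \<in> ?C" and rk: "(r,b) \<in> G ^^ ?k" by blast
    have "?k \<noteq> 0"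
    proof
      assume "?k = 0"
      then have "r = b" using rk by simp
      then show False using rC False by simp
    qed
    then obtain k' where k': "?k = Suc k'" by (cases ?k) auto
    then obtain p where rp: "(r,p) \<in> G ^^ k'" and pb: "(p,b) \<in> G" using rk by auto
    have "\<not> (\<exists>!j. (j,b) \<in> G)" using bnw False unfolding wire_def by auto
    then obtain a where ab: "(a,b) \<in> G" and ap: "a \<noteq> p" using pb by blast
    have abW: "(a,b) \<notin> W" using False unfolding W_def by auto
    have rb: "(r,b) \<in> (G - {(a,b)})\<^sup>*"
    proof -
      from relpow_avoid[OF rp, of a b] show ?thesis
      proof
        assume "(r, p) \<in> (G - {(a, b)}) ^^ k'"
        moreover have "(p,b) \<in> G - {(a,b)}" using pb ap by auto
        ultimately have "(r,b) \<in> (G - {(a, b)}) ^^ Suc k'" by (rule relpow_Suc_I)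
        then show ?thesis using rtrancl_power by blast
      next
        assume "\<exists>j1 j2. j1 + 1 + j2 = k' \<and> (r, a) \<in> G ^^ j1 \<and> (b, p) \<in> G ^^ j2"
        then obtain j1 j2 where "j1 + 1 + j2 = k'" "(r,a) \<in> G ^^ j1" by blast
        then have "j1 < k'" "(r,a) \<in> G ^^ j1" by auto
        then have "(r,b) \<in> G ^^ Suc j1" using ab by auto
        then have "?k \<le> Suc j1" unfolding distR_def using rC by (metis (mono_tags, lifting) Least_le)
        with \<open>j1 < k'\<close> k' show ?thesis by simp
      qed
    qed
    show ?thesis
      apply (rule that[of a])
      using ab abW bnw rb rC by auto
  qed
  have bQ: "(b,v) \<in> (G - {(a,b)})\<^sup>*" using shortcut[of b v G b a] SC by blast
  let ?s = "sd a b"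
  have cycW: "\<forall>i<m. (c i, c (Suc i mod m)) \<noteq> (a,b)" using abW unfolding W_def by auto
  have vW: "\<forall>i<m. (v, c i) \<noteq> (a,b)" using abW unfolding W_def by auto
  have cyc: "\<forall>i<m. (c i, c (Suc i mod m)) \<in> G \<and> ?s (c i) (c (Suc i mod m))"
    using arcs cycW unfolding sd_def by auto
  have notalive: "\<forall>x0. \<not>(\<exists>i<m. traj G ?s x0 (Suc ?N) (c i))"
  proof (intro allI notI)
    fix x0 assume al: "\<exists>i<m. traj G ?s x0 (Suc ?N) (c i)"
    have hub: "\<forall>t\<le>?N. traj G ?s x0 t v"
    proof (intro allI impI)
      fix t assume tN: "t \<le> ?N"
      obtain i where i: "i < m" "traj G ?s x0 (Suc t) (c i)"
        using alive_back[OF cyc al, of "Suc t"] tN by auto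
      have "traj G ?s x0 t v = ?s v (c i)" using pos_back[OF i(2)] arcs i(1) by blast
      then show "traj G ?s x0 t v" using vW i(1) unfolding sd_def by auto
    qed
    let ?ch = "\<lambda>j. (par G ^^ j) a"
    let ?P = "G - {(a,b)}"
    obtain k where k: "\<not> wire G ?C (?ch k)" "\<forall>i'<k. wire G ?C (?ch i')"
      using chain_ends[OF wc(3), of a] exists_least_iff[of "\<lambda>i. \<not> wire G ?C (?ch i)"] by blast
    show False
    proof (cases "\<exists>i\<le>k. (?ch i, v) \<in> ?P\<^sup>*")
      case True
      then obtain i where i: "i \<le> k" "(?ch i, v) \<in> ?P\<^sup>*" by blast
      have "\<forall>i'<i. wire G ?C (?ch i')" using k(2) i(1) by auto
      then have ex: "\<exists>i. (\<forall>i'<i. wire G ?C (?ch i')) \<and> (?ch i, v) \<in> ?P\<^sup>*"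
        using i(2) by blast
      show False by (rule case1[OF hub bQ ab bnw wc(3) ex])
    next
      case False
      then have nQ: "\<forall>i\<le>k. (?ch i, v) \<notin> ?P\<^sup>*" by blast
      have kC: "?ch k \<in> ?C"
      proof (rule ccontr)
        assume "?ch k \<notin> ?C"
        then have "?ch k \<in> S" using k(1) unfolding S_def by blast
        then have "?d (?ch k) \<le> ?d b" using bmax by blast
        moreover have "(?ch k, v) \<in> G\<^sup>*" using SC by blast
        ultimately have "(?ch k, v) \<in> ?P\<^sup>*" using shortcut[of "?ch k" v G b a] by blast
        with nQ show False by blast
      qed
      then obtain u where u: "u < m" "?ch k = c u" by auto
      have RQ: "\<forall>r\<in>?C. (r,v) \<notin> ?P\<^sup>*"
      proof (intro ballI notI)
        fix r assume "r \<in> ?C" "(r,v) \<in> ?P\<^sup>*"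
        then obtain j where j: "j < m" "r = c j" by auto
        have "\<forall>i<m. (c i, c (Suc i mod m)) \<in> ?P" using arcs cycW by auto
        then have "(c u, c j) \<in> ?P\<^sup>*" using cyc_reach u(1) j(1) by metis
        then have "(?ch k, v) \<in> ?P\<^sup>*" using u(2) j(2) \<open>(r,v) \<in> ?P\<^sup>*\<close> by simp
        with nQ show False by blast
      qed
      have "\<forall>t < card ?C. \<not> traj G ?s x0 t (?ch k)"
        by (rule case2[OF hub bQ ab bnw wc(3) k(2)]) (use nQ RQ in auto)
      then have "\<forall>t<m. \<not> traj G ?s x0 t (c u)" using wc(1) u(2) by simp
      from cyc_rule[OF cyc u(1) this] have "\<forall>i<m. \<not> traj G ?s x0 (m - 1) (c i)" .
      moreover have "\<exists>i<m. traj G ?s x0 (m - 1) (c i)" using alive_back[OF cyc al, of "m - 1"] wc(2) by simp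
      ultimately show False by blast
    qed
  qed
  have reachP: "\<forall>i. \<exists>r\<in>?C. (r,i) \<in> {(j,i). (j,i) \<in> G \<and> ?s j i}\<^sup>*"
    apply (rule reach_P[OF SC, of "c 0"])
    using m2 rb unfolding sd_P by (auto simp: sd_def)
  have "nilpotent_class_le (FF G ?s) (2 * ?N + 1 - m)"
    by (rule wheel_finish[OF cyc reachP notalive wc(1)]) (use wc(2) in simp)
  then show ?thesis using FF_admits by blast
qed



lemma nil_mono: "nilpotent_class_le f k \<Longrightarrow> k \<le> k' \<Longrightarrow> nilpotent_class_le f k'"
  unfolding nilpotent_class_le_def by (meson order_trans)

theorem theorem4:
  fixes G :: "('n::finite \<times> 'n) set"
  assumes "card (UNIV :: 'n set) \<ge> 2" and "strongly_connected G"
  shows "(\<forall>m\<ge>1. contains_wheel G m \<longrightarrow>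
            (\<exists>f. admits G f \<and> nilpotent_class_le f (2 * card (UNIV :: 'n set) + 1 - m)))
       \<and> ((\<exists>v. (v, v) \<in> G) \<longrightarrow>
            (\<exists>f. admits G f \<and> nilpotent_class_le f (2 * card (UNIV :: 'n set) - 1)))"
proof
  have SC: "\<forall>u v. (u,v) \<in> G\<^sup>*" using assms(2) unfolding strongly_connected_def by blast
  show "\<forall>m\<ge>1. contains_wheel G m \<longrightarrow>
            (\<exists>f. admits G f \<and> nilpotent_class_le f (2 * card (UNIV :: 'n set) + 1 - m))"
  proof (intro allI impI)
    fix m :: nat assume m1: "1 \<le> m" and cw: "contains_wheel G m"
    then obtain v c where inj: "inj_on c {0..<m}" and vC: "v \<notin> c ` {0..<m}"
      and arcs: "\<forall>i<m. (c i, c (Suc i mod m)) \<in> G \<and> (v, c i) \<in> G"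
      unfolding contains_wheel_def by blast
    show "\<exists>f. admits G f \<and> nilpotent_class_le f (2 * card (UNIV :: 'n set) + 1 - m)"
    proof (cases "m = 1")
      case True
      then have "(c 0, c 0) \<in> G" using arcs by auto
      then obtain f where "admits G f" "nilpotent_class_le f (2 * card (UNIV :: 'n set) - 1)"
        using loop_case[OF assms(1) SC] by blast
      moreover have "2 * card (UNIV :: 'n set) - 1 \<le> 2 * card (UNIV :: 'n set) + 1 - m"
        using True by simp
      ultimately show ?thesis using nil_mono by blast
    next
      case False
      then have m2: "2 \<le> m" using m1 by simp
      define W where "W = {(c i, c (Suc i mod m)) | i. i < m} \<union> {(v, c i) | i. i < m}"
      define S where "S = {x. x \<notin> c ` {0..<m} \<and> \<not> wire G (c ` {0..<m}) x}
                  \<union> {x. x \<in> c ` {0..<m} \<and> (\<exists>a. (a,x) \<in> G \<and> (a,x) \<notin> W)}"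
      show ?thesis
      proof (cases "S = {}")
        case True
        then have "\<forall>x. x \<notin> c ` {0..<m} \<longrightarrow> wire G (c ` {0..<m}) x" unfolding S_def by blast
        then show ?thesis by (rule wheel_B[OF SC m2 inj vC arcs])
      next
        case False
        show ?thesis by (rule wheel_A[OF SC m2 inj vC arcs False W_def S_def])
      qed
    qed
  qed
  show "(\<exists>v. (v, v) \<in> G) \<longrightarrow>
            (\<exists>f. admits G f \<and> nilpotent_class_le f (2 * card (UNIV :: 'n set) - 1))"
    using loop_case[OF assms(1) SC] by blast
qed


end
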